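(* Let $(M,g)$ be a Riemannian manifold and $\mathfrak{X}$ a Killing vector field on $M$. Then at every point $|\mathfrak{X}|^2|\nabla\mathfrak{X}|^2\ge2|\nabla_{\mathfrak{X}}\mathfrak{X}|^2$.
   Context: $|\nabla\mathfrak{X}|^2=\sum_i|\nabla_{e_i}\mathfrak{X}|^2$ for an orthonormal basis $(e_i)$ of the tangent space; $\nabla$ is the Levi-Civita connection of $g$. *)

theory Defs
  imports "HOL-Analysis.Analysis"
begin

text \<open>Local (coordinate) model of a Riemannian manifold: an open set U of R^n
  with a metric tensor g(x) = (g_ij(x)); vectors are coordinate vectors.\<close>

definition pd :: "(real^'n \<Rightarrow> real) \<Rightarrow> real^'n \<Rightarrow> 'n \<Rightarrow> real" where
  "pd f x i = frechet_derivative f (at x) (axis i 1)"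

definition riemannian_metric :: "(real^'n) set \<Rightarrow> (real^'n \<Rightarrow> real^'n^'n) \<Rightarrow> bool" where
  "riemannian_metric U g \<longleftrightarrow> open U \<and>
     (\<forall>x\<in>U. transpose (g x) = g x \<and> (\<forall>v. v \<noteq> 0 \<longrightarrow> v \<bullet> (g x *v v) > 0)) \<and>
     (\<forall>i j. (\<lambda>x. g x $ i $ j) differentiable_on U)"

definition vector_field :: "(real^'n) set \<Rightarrow> (real^'n \<Rightarrow> real^'n) \<Rightarrow> bool" where
  "vector_field U X \<longleftrightarrow> (\<forall>j. (\<lambda>x. X x $ j) differentiable_on U)"

definition christoffel :: "(real^'n \<Rightarrow> real^'n^'n) \<Rightarrow> real^'n \<Rightarrow> 'n \<Rightarrow> 'n \<Rightarrow> 'n \<Rightarrow> real" where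
  "christoffel g x k i j = (1/2) * (\<Sum>l\<in>UNIV. matrix_inv (g x) $ k $ l *
      (pd (\<lambda>y. g y $ j $ l) x i + pd (\<lambda>y. g y $ i $ l) x j - pd (\<lambda>y. g y $ i $ j) x l))"

text \<open>Killing field: the Lie derivative of g along X vanishes,
  (L_X g)_ij = X^k d_k g_ij + g_kj d_i X^k + g_ik d_j X^k = 0.\<close>
definition killing :: "(real^'n) set \<Rightarrow> (real^'n \<Rightarrow> real^'n^'n) \<Rightarrow> (real^'n \<Rightarrow> real^'n) \<Rightarrow> bool" where
  "killing U g X \<longleftrightarrow> (\<forall>x\<in>U. \<forall>i j.
     (\<Sum>k\<in>UNIV. X x $ k * pd (\<lambda>y. g y $ i $ j) x k
        + g x $ k $ j * pd (\<lambda>y. X y $ k) x i + g x $ i $ k * pd (\<lambda>y. X y $ k) x j) = 0)"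

definition covd :: "(real^'n \<Rightarrow> real^'n^'n) \<Rightarrow> (real^'n \<Rightarrow> real^'n) \<Rightarrow> real^'n \<Rightarrow> real^'n \<Rightarrow> real^'n" where
  "covd g X x v = (\<chi> j. \<Sum>i\<in>UNIV. v $ i * (pd (\<lambda>y. X y $ j) x i
       + (\<Sum>k\<in>UNIV. christoffel g x j i k * X x $ k)))"

definition gnorm2 :: "(real^'n \<Rightarrow> real^'n^'n) \<Rightarrow> real^'n \<Rightarrow> real^'n \<Rightarrow> real" where
  "gnorm2 g x v = v \<bullet> (g x *v v)"

definition g_orthonormal :: "(real^'n \<Rightarrow> real^'n^'n) \<Rightarrow> real^'n \<Rightarrow> ('n \<Rightarrow> real^'n) \<Rightarrow> bool" where
  "g_orthonormal g x e \<longleftrightarrow> (\<forall>a b. e a \<bullet> (g x *v e b) = (if a = b then 1 else 0))"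

end

theory Submission
  imports Defs
begin

lemma skew_entry:
  fixes B :: "real^'n^'n"
  assumes "transpose B = - B"
  shows "B$i$j = - (B$j$i)"
proof -
  have "(transpose B)$j$i = (-B)$j$i" using assms by simp
  then show ?thesis by (simp add: transpose_def)
qed

lemma skew_quad0:
  fixes B :: "real^'n^'n" and v :: "real^'n"
  assumes "transpose B = - B"
  shows "v \<bullet> (B *v v) = 0"
proof -
  have Bt: "\<And>i j. B$i$j = - (B$j$i)" using skew_entry[OF assms] by blast
  have "v \<bullet> (B *v v) = (\<Sum>i\<in>UNIV. \<Sum>j\<in>UNIV. v$i * B$i$j * v$j)"
    by (simp add: inner_vec_def matrix_vector_mult_def sum_distrib_left mult.assoc)
  also have "\<dots> = (\<Sum>j\<in>UNIV. \<Sum>i\<in>UNIV. v$i * B$i$j * v$j)" by (rule sum.swap)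
  also have "\<dots> = - (\<Sum>j\<in>UNIV. \<Sum>i\<in>UNIV. v$j * B$j$i * v$i)"
  proof -
    have t: "\<And>i j. v$i * B$i$j * v$j = -(v$j * B$j$i * v$i)"
      by (subst Bt) (simp add: algebra_simps)
    show ?thesis unfolding sum_negf[symmetric] by (intro sum.cong refl) (rule t)
  qed
  finally have "v \<bullet> (B *v v) = - (v \<bullet> (B *v v))"
    by (simp add: inner_vec_def matrix_vector_mult_def sum_distrib_left mult.assoc)
  then show ?thesis by simp
qed

lemma eucl_ineq:
  fixes B :: "real^'n^'n" and v :: "real^'n"
  assumes sk: "transpose B = - B"
  shows "2 * ((B *v v) \<bullet> (B *v v)) \<le> (v \<bullet> v) * (B \<bullet> B)"
proof -
  define Y where "Y = B *v v"
  have vY: "v \<bullet> Y = 0" using skew_quad0[OF sk] by (simp add: Y_def)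
  define C :: "real^'n^'n" where "C = (\<chi> i j. Y$i * v$j - v$i * Y$j)"
  have Bt: "\<And>i j. B$i$j = - (B$j$i)" using skew_entry[OF sk] by blast
  have BC: "B \<bullet> C = 2 * (Y \<bullet> Y)"
  proof -
    have "B \<bullet> C = (\<Sum>i\<in>UNIV. \<Sum>j\<in>UNIV. B$i$j * (Y$i * v$j - v$i * Y$j))"
      by (simp add: inner_vec_def C_def)
    also have "\<dots> = (\<Sum>i\<in>UNIV. \<Sum>j\<in>UNIV. Y$i * (B$i$j * v$j)) + (\<Sum>i\<in>UNIV. \<Sum>j\<in>UNIV. v$i * (B$j$i * Y$j))"
    proof -
      have t: "\<And>i j. B$i$j * (Y$i * v$j - v$i * Y$j) = Y$i * (B$i$j * v$j) + v$i * (B$j$i * Y$j)"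
        by (subst (2) Bt) (simp add: algebra_simps)
      show ?thesis by (simp only: t sum.distrib)
    qed
    also have "(\<Sum>i\<in>UNIV. \<Sum>j\<in>UNIV. v$i * (B$j$i * Y$j)) = (\<Sum>j\<in>UNIV. Y$j * (\<Sum>i\<in>UNIV. B$j$i * v$i))"
      by (subst sum.swap) (simp add: sum_distrib_left algebra_simps)
    finally show ?thesis
      by (simp add: Y_def inner_vec_def matrix_vector_mult_def sum_distrib_left[symmetric])
  qed
  have CC: "C \<bullet> C = 2 * (Y \<bullet> Y) * (v \<bullet> v) - 2 * (v \<bullet> Y)^2"
  proof -
    have "C \<bullet> C = (\<Sum>i\<in>UNIV. \<Sum>j\<in>UNIV. (Y$i * v$j - v$i * Y$j)^2)"
      by (simp add: inner_vec_def C_def power2_eq_square)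
    also have "\<dots> = (\<Sum>i\<in>UNIV. \<Sum>j\<in>UNIV. (Y$i * Y$i) * (v$j * v$j)) + (\<Sum>i\<in>UNIV. \<Sum>j\<in>UNIV. (v$i * v$i) * (Y$j * Y$j))
        - 2 * (\<Sum>i\<in>UNIV. \<Sum>j\<in>UNIV. (v$i * Y$i) * (v$j * Y$j))"
      by (simp add: power2_eq_square algebra_simps sum.distrib sum_subtractf sum_distrib_left)
    also have "\<dots> = 2 * (Y \<bullet> Y) * (v \<bullet> v) - 2 * (v \<bullet> Y)^2"
    proof -
      have s1: "(\<Sum>i\<in>UNIV. \<Sum>j\<in>UNIV. (Y$i * Y$i) * (v$j * v$j)) = (Y \<bullet> Y) * (v \<bullet> v)"
        by (simp add: inner_vec_def sum_product)
      have s2: "(\<Sum>i\<in>UNIV. \<Sum>j\<in>UNIV. (v$i * v$i) * (Y$j * Y$j)) = (Y \<bullet> Y) * (v \<bullet> v)"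
        by (simp add: inner_vec_def sum_product mult.commute) (rule sum.swap)
      have s3: "(\<Sum>i\<in>UNIV. \<Sum>j\<in>UNIV. (v$i * Y$i) * (v$j * Y$j)) = (v \<bullet> Y)^2"
        by (simp add: inner_vec_def sum_product power2_eq_square)
      show ?thesis by (simp only: s1 s2 s3)
    qed
    finally show ?thesis .
  qed
  have cs: "(B \<bullet> C)^2 \<le> (B \<bullet> B) * (C \<bullet> C)" by (rule Cauchy_Schwarz_ineq)
  have yy: "Y \<bullet> Y \<ge> 0" "v \<bullet> v \<ge> 0" "B \<bullet> B \<ge> 0" by auto
  from cs have "4 * (Y \<bullet> Y) * (Y \<bullet> Y) \<le> (B \<bullet> B) * (2 * (Y \<bullet> Y) * (v \<bullet> v))"
    by (simp add: BC CC vY power2_eq_square)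
  then have "(Y \<bullet> Y) * (2 * (Y \<bullet> Y) - (v \<bullet> v) * (B \<bullet> B)) \<le> 0"
    by (simp add: algebra_simps)
  then show ?thesis unfolding Y_def[symmetric]
    using yy by (cases "Y \<bullet> Y = 0") (auto simp: mult_le_0_iff)
qed


lemma mm_rneg: "(A::real^'n^'m) ** (- B) = - (A ** (B::real^'k^'n))"
  by (simp add: vec_eq_iff matrix_matrix_mult_def sum_negf)

lemma mm_lneg: "(- (A::real^'n^'m)) ** B = - (A ** (B::real^'k^'n))"
  by (simp add: vec_eq_iff matrix_matrix_mult_def sum_negf)

lemma adj_inner: "((P::real^'n^'m) *v u) \<bullet> z = u \<bullet> (transpose P *v z)"
  by (metis dot_lmul_matrix vector_transpose_matrix)

lemma axis_entry: "axis a (1::real) \<bullet> ((N::real^'n^'n) *v axis b 1) = N$a$b"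
  by (simp add: matrix_vector_mult_def inner_vec_def axis_def if_distrib if_distribR sum.delta cong del: if_weak_cong)

lemma g_ineq:
  fixes G M :: "real^'n^'n" and e :: "'n \<Rightarrow> real^'n" and X :: "real^'n"
  assumes symG: "transpose G = G"
    and on: "\<And>a b. e a \<bullet> (G *v e b) = (if a = b then 1 else 0)"
    and sk: "G ** M + transpose M ** G = 0"
  shows "2 * ((M *v X) \<bullet> (G *v (M *v X)))
     \<le> (X \<bullet> (G *v X)) * (\<Sum>a\<in>UNIV. (M *v e a) \<bullet> (G *v (M *v e a)))"
proof -
  define E :: "real^'n^'n" where "E = (\<chi> i a. e a $ i)"
  have Ecol: "\<And>a. E *v axis a 1 = e a"
    by (simp add: E_def vec_eq_iff matrix_vector_mult_def axis_def if_distrib if_distribR sum.delta' cong del: if_weak_cong)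
  have EGE: "transpose E ** G ** E = mat 1"
  proof -
    have "\<And>a b. (transpose E ** G ** E)$a$b = (mat 1 :: real^'n^'n)$a$b"
    proof -
      fix a b
      have "(transpose E ** G ** E)$a$b = axis a 1 \<bullet> ((transpose E ** G ** E) *v axis b 1)"
        by (simp add: axis_entry)
      also have "\<dots> = (E *v axis a 1) \<bullet> (G *v (E *v axis b 1))"
        by (simp add: adj_inner matrix_vector_mul_assoc matrix_mul_assoc)
      also have "\<dots> = (mat 1 :: real^'n^'n)$a$b" by (simp add: Ecol on mat_def)
      finally show "(transpose E ** G ** E)$a$b = (mat 1 :: real^'n^'n)$a$b" .
    qed
    then show ?thesis by (simp add: vec_eq_iff)
  qed
  have EL: "E ** (transpose E ** G) = mat 1"
    using matrix_left_right_inverse EGE by blast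
  define B where "B = transpose E ** G ** M ** E"
  have MtG: "transpose M ** G = - (G ** M)" using sk by (simp add: eq_neg_iff_add_eq_0 add.commute)
  have skB: "transpose B = - B"
  proof -
    have "transpose B = transpose E ** (transpose M ** transpose G) ** E"
      by (simp add: B_def matrix_transpose_mul matrix_mul_assoc)
    also have "\<dots> = - B" by (simp add: symG MtG mm_rneg mm_lneg B_def matrix_mul_assoc)
    finally show ?thesis .
  qed
  have EB: "E ** B = M ** E"
  proof -
    have "E ** B = (E ** (transpose E ** G)) ** M ** E" by (simp add: B_def matrix_mul_assoc)
    then show ?thesis by (simp add: EL)
  qed
  have nrm: "\<And>\<xi>. (E *v \<xi>) \<bullet> (G *v (E *v \<xi>)) = \<xi> \<bullet> \<xi>"
  proof -
    fix \<xi> :: "real^'n"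
    have "(E *v \<xi>) \<bullet> (G *v (E *v \<xi>)) = \<xi> \<bullet> ((transpose E ** G ** E) *v \<xi>)"
      by (simp add: adj_inner matrix_vector_mul_assoc matrix_mul_assoc)
    then show "(E *v \<xi>) \<bullet> (G *v (E *v \<xi>)) = \<xi> \<bullet> \<xi>" by (simp add: EGE)
  qed
  have ME: "\<And>\<xi>. M *v (E *v \<xi>) = E *v (B *v \<xi>)"
    by (simp add: matrix_vector_mul_assoc EB)
  define \<xi> where "\<xi> = (transpose E ** G) *v X"
  have X: "X = E *v \<xi>" by (simp add: \<xi>_def matrix_vector_mul_assoc EL)
  have n1: "X \<bullet> (G *v X) = \<xi> \<bullet> \<xi>" by (simp add: X nrm)
  have n2: "(M *v X) \<bullet> (G *v (M *v X)) = (B *v \<xi>) \<bullet> (B *v \<xi>)" by (simp add: X ME nrm)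
  have n3: "(\<Sum>a\<in>UNIV. (M *v e a) \<bullet> (G *v (M *v e a))) = B \<bullet> B"
  proof -
    have "(\<Sum>a\<in>UNIV. (M *v e a) \<bullet> (G *v (M *v e a))) = (\<Sum>a\<in>UNIV. (B *v axis a 1) \<bullet> (B *v axis a 1))"
      by (simp add: Ecol[symmetric] ME nrm)
    also have "\<dots> = (\<Sum>a\<in>UNIV. \<Sum>i\<in>UNIV. B$i$a * B$i$a)"
      by (simp add: inner_vec_def matrix_vector_mult_def axis_def if_distrib if_distribR sum.delta' cong del: if_weak_cong)
    also have "\<dots> = (\<Sum>i\<in>UNIV. \<Sum>a\<in>UNIV. B$i$a * B$i$a)" by (rule sum.swap)
    also have "\<dots> = B \<bullet> B" by (simp add: inner_vec_def)
    finally show ?thesis .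
  qed
  show ?thesis unfolding n1 n2 n3 using eucl_ineq[OF skB] by simp
qed


lemma lowG:
  fixes g :: "real^'n \<Rightarrow> real^'n^'n"
  assumes inv: "g x ** matrix_inv (g x) = mat 1"
  shows "(\<Sum>k\<in>UNIV. g x $ m $ k * christoffel g x k a b) =
    (1/2) * (pd (\<lambda>y. g y $ b $ m) x a + pd (\<lambda>y. g y $ a $ m) x b - pd (\<lambda>y. g y $ a $ b) x m)"
proof -
  define T where "T l = pd (\<lambda>y. g y $ b $ l) x a + pd (\<lambda>y. g y $ a $ l) x b - pd (\<lambda>y. g y $ a $ b) x l" for l
  have "(\<Sum>k\<in>UNIV. g x $ m $ k * christoffel g x k a b)
      = (\<Sum>k\<in>UNIV. \<Sum>l\<in>UNIV. (1/2) * (g x $ m $ k * matrix_inv (g x) $ k $ l * T l))"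
    by (simp add: christoffel_def T_def sum_distrib_left mult.assoc)
  also have "\<dots> = (\<Sum>l\<in>UNIV. (1/2) * ((\<Sum>k\<in>UNIV. g x $ m $ k * matrix_inv (g x) $ k $ l) * T l))"
    by (subst sum.swap) (simp add: sum_distrib_left sum_distrib_right)
  also have "\<dots> = (\<Sum>l\<in>UNIV. (1/2) * ((g x ** matrix_inv (g x)) $ m $ l * T l))"
    by (simp add: matrix_matrix_mult_def)
  also have "\<dots> = (1/2) * T m"
    by (simp add: inv mat_def if_distrib if_distribR sum.delta cong del: if_weak_cong)
  finally show ?thesis by (simp add: T_def)
qed

lemma skew_killing:
  fixes g :: "real^'n \<Rightarrow> real^'n^'n" and X :: "real^'n \<Rightarrow> real^'n"
  assumes inv: "g x ** matrix_inv (g x) = mat 1"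
    and symG: "transpose (g x) = g x"
    and dsym: "\<And>a b c. pd (\<lambda>y. g y $ a $ b) x c = pd (\<lambda>y. g y $ b $ a) x c"
    and kil: "\<And>i j. (\<Sum>k\<in>UNIV. X x $ k * pd (\<lambda>y. g y $ i $ j) x k
        + g x $ k $ j * pd (\<lambda>y. X y $ k) x i + g x $ i $ k * pd (\<lambda>y. X y $ k) x j) = 0"
    and Mdef: "M = (\<chi> j i. pd (\<lambda>y. X y $ j) x i + (\<Sum>k\<in>UNIV. christoffel g x j i k * X x $ k))"
  shows "g x ** M + transpose M ** g x = 0"
proof -
  define d where "d c i j = pd (\<lambda>y. g y $ i $ j) x c" for c i j
  define P where "P k i = pd (\<lambda>y. X y $ k) x i" for k i
  have Gs: "\<And>i j. g x $ i $ j = g x $ j $ i"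
  proof -
    fix i j
    have "transpose (g x) $ j $ i = g x $ j $ i" using symG by simp
    then show "g x $ i $ j = g x $ j $ i" by (simp add: transpose_def)
  qed
  have low: "\<And>m a. (\<Sum>k\<in>UNIV. g x $ m $ k * (\<Sum>l\<in>UNIV. christoffel g x k a l * X x $ l))
       = (\<Sum>l\<in>UNIV. X x $ l * ((1/2) * (d a l m + d l a m - d m a l)))"
  proof -
    fix m a
    have "(\<Sum>k\<in>UNIV. g x $ m $ k * (\<Sum>l\<in>UNIV. christoffel g x k a l * X x $ l))
        = (\<Sum>k\<in>UNIV. \<Sum>l\<in>UNIV. X x $ l * (g x $ m $ k * christoffel g x k a l))"
      by (simp add: sum_distrib_left algebra_simps)
    also have "\<dots> = (\<Sum>l\<in>UNIV. X x $ l * (\<Sum>k\<in>UNIV. g x $ m $ k * christoffel g x k a l))"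
      by (subst sum.swap) (simp add: sum_distrib_left)
    finally have "(\<Sum>k\<in>UNIV. g x $ m $ k * (\<Sum>l\<in>UNIV. christoffel g x k a l * X x $ l))
        = (\<Sum>l\<in>UNIV. X x $ l * (\<Sum>k\<in>UNIV. g x $ m $ k * christoffel g x k a l))" .
    then show "?thesis m a" by (simp add: lowG[of g x, OF inv] d_def)
  qed
  have "\<And>i j. (g x ** M + transpose M ** g x) $ i $ j = 0"
  proof -
    fix i j
    have e1: "(g x ** M) $ i $ j = (\<Sum>k\<in>UNIV. g x $ i $ k * P k j)
        + (\<Sum>l\<in>UNIV. X x $ l * ((1/2) * (d j l i + d l j i - d i j l)))"
    proof -
      have "(g x ** M) $ i $ j = (\<Sum>k\<in>UNIV. g x $ i $ k * P k j)
        + (\<Sum>k\<in>UNIV. g x $ i $ k * (\<Sum>l\<in>UNIV. christoffel g x k j l * X x $ l))"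
        by (simp add: Mdef matrix_matrix_mult_def P_def distrib_left sum.distrib)
      then show ?thesis by (simp only: low)
    qed
    have e2: "(transpose M ** g x) $ i $ j = (\<Sum>k\<in>UNIV. g x $ k $ j * P k i)
        + (\<Sum>l\<in>UNIV. X x $ l * ((1/2) * (d i l j + d l i j - d j i l)))"
    proof -
      have "(transpose M ** g x) $ i $ j = (\<Sum>k\<in>UNIV. g x $ j $ k * M $ k $ i)"
        by (simp add: matrix_matrix_mult_def transpose_def Gs mult.commute)
      also have "\<dots> = (\<Sum>k\<in>UNIV. g x $ j $ k * P k i)
        + (\<Sum>l\<in>UNIV. X x $ l * ((1/2) * (d i l j + d l i j - d j i l)))"
      proof -
        have "(\<Sum>k\<in>UNIV. g x $ j $ k * M $ k $ i) = (\<Sum>k\<in>UNIV. g x $ j $ k * P k i)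
          + (\<Sum>k\<in>UNIV. g x $ j $ k * (\<Sum>l\<in>UNIV. christoffel g x k i l * X x $ l))"
          by (simp add: Mdef P_def distrib_left sum.distrib)
        then show ?thesis by (simp only: low)
      qed
      finally show ?thesis by (simp add: Gs)
    qed
    have e3: "(\<Sum>l\<in>UNIV. X x $ l * ((1/2) * (d j l i + d l j i - d i j l)))
        + (\<Sum>l\<in>UNIV. X x $ l * ((1/2) * (d i l j + d l i j - d j i l)))
        = (\<Sum>l\<in>UNIV. X x $ l * d l i j)"
    proof -
      have t: "\<And>l. X x $ l * ((1/2) * (d j l i + d l j i - d i j l)) + X x $ l * ((1/2) * (d i l j + d l i j - d j i l))
         = X x $ l * d l i j"
      proof -
        fix l
        have "d j l i = d j i l" "d l j i = d l i j" "d i j l = d i l j"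
          by (simp_all add: d_def dsym)
        then show "?thesis l" by (simp add: algebra_simps)
      qed
      show ?thesis by (simp only: sum.distrib[symmetric] t)
    qed
    have k: "(\<Sum>l\<in>UNIV. X x $ l * d l i j) + (\<Sum>k\<in>UNIV. g x $ k $ j * P k i) + (\<Sum>k\<in>UNIV. g x $ i $ k * P k j) = 0"
      using kil[of i j] by (simp add: sum.distrib d_def P_def)
    show "(g x ** M + transpose M ** g x) $ i $ j = 0"
      using e1 e2 e3 k by simp
  qed
  then show ?thesis by (simp add: vec_eq_iff)
qed


theorem lemma4p10:
  fixes U :: "(real^'n) set" and g :: "real^'n \<Rightarrow> real^'n^'n"
    and X :: "real^'n \<Rightarrow> real^'n" and x :: "real^'n" and e :: "'n \<Rightarrow> real^'n"
  assumes "riemannian_metric U g" and "vector_field U X" and "killing U g X"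
    and "x \<in> U" and "g_orthonormal g x e"
  shows "gnorm2 g x (X x) * (\<Sum>a\<in>UNIV. gnorm2 g x (covd g X x (e a)))
           \<ge> 2 * gnorm2 g x (covd g X x (X x))"
proof -
  have oU: "open U" and symG: "transpose (g x) = g x"
    and pos: "\<And>v. v \<noteq> 0 \<Longrightarrow> v \<bullet> (g x *v v) > 0"
    and dif: "\<And>i j. (\<lambda>y. g y $ i $ j) differentiable_on U"
    using assms(1,4) unfolding riemannian_metric_def by auto
  have "\<exists>L. L ** g x = mat 1"
    unfolding matrix_left_invertible_ker
  proof (intro allI impI)
    fix v assume "g x *v v = 0"
    then show "v = 0" using pos[of v] by (cases "v = 0") auto
  qed
  then obtain L where "L ** g x = mat 1" by blast
  then have "g x ** L = mat 1" using matrix_left_right_inverse by blast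
  with \<open>L ** g x = mat 1\<close> have "\<exists>A'. g x ** A' = mat 1 \<and> A' ** g x = mat 1" by blast
  then have inv: "g x ** matrix_inv (g x) = mat 1"
    unfolding matrix_inv_def by (rule someI2_ex) blast
  have symU: "\<And>y a b. y \<in> U \<Longrightarrow> g y $ a $ b = g y $ b $ a"
  proof -
    fix y a b assume "y \<in> U"
    then have "transpose (g y) = g y" using assms(1) unfolding riemannian_metric_def by auto
    then have "transpose (g y) $ b $ a = g y $ b $ a" by simp
    then show "g y $ a $ b = g y $ b $ a" by (simp add: transpose_def)
  qed
  have dsym: "\<And>a b c. pd (\<lambda>y. g y $ a $ b) x c = pd (\<lambda>y. g y $ b $ a) x c"
  proof -
    fix a b c
    have "(\<lambda>y. g y $ a $ b) differentiable at x"
      using dif[of a b] oU assms(4) differentiable_on_eq_differentiable_at by blast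
    then have "frechet_derivative (\<lambda>y. g y $ a $ b) (at x) = frechet_derivative (\<lambda>y. g y $ b $ a) (at x)"
      by (rule frechet_derivative_transform_within_open[OF _ oU assms(4)]) (simp add: symU)
    then show "pd (\<lambda>y. g y $ a $ b) x c = pd (\<lambda>y. g y $ b $ a) x c" by (simp add: pd_def)
  qed
  have kil: "\<And>i j. (\<Sum>k\<in>UNIV. X x $ k * pd (\<lambda>y. g y $ i $ j) x k
        + g x $ k $ j * pd (\<lambda>y. X y $ k) x i + g x $ i $ k * pd (\<lambda>y. X y $ k) x j) = 0"
    using assms(3,4) unfolding killing_def by blast
  define M where "M = (\<chi> j i. pd (\<lambda>y. X y $ j) x i + (\<Sum>k\<in>UNIV. christoffel g x j i k * X x $ k))"
  have sk: "g x ** M + transpose M ** g x = 0"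
    by (rule skew_killing[OF inv symG dsym kil M_def])
  have cov: "\<And>v. covd g X x v = M *v v"
    by (simp add: covd_def M_def matrix_vector_mult_def vec_eq_iff mult.commute)
  have on: "\<And>a b. e a \<bullet> (g x *v e b) = (if a = b then 1 else 0)"
    using assms(5) unfolding g_orthonormal_def by blast
  show ?thesis
    unfolding gnorm2_def cov using g_ineq[OF symG on sk, of "X x"] by simp
qed

end
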